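(* Let $\alpha,\beta,\gamma\in\mathbb{C}$ with $\beta,\gamma\notin\{q^{-n}:n\in\mathbb{N}_0\}$. Then, as formal power series in $x,y$: (i) $\mathbf{H}_6(\alpha q;\beta;q,x,y)=\mathbf{H}_6(\alpha;\beta;q,x,y)+\frac{\alpha x(1-\alpha q)}{1-\beta}\mathbf{H}_6(\alpha q^2;\beta q;q,x,y)+\frac{\alpha xq(1-\alpha q)}{1-\beta}\mathbf{H}_6(\alpha q^2;\beta q;q,xq,y)+\frac{\alpha y}{1-\beta}\mathbf{H}_6(\alpha q;\beta q;q,xq^2,y)$; (ii) $\mathbf{H}_6(\alpha q;\beta;q,x,y)=\mathbf{H}_6(\alpha;\beta;q,x,y)+\frac{\alpha y}{1-\beta}\mathbf{H}_6(\alpha q;\beta q;q,x,y)+\frac{\alpha xq(1-\alpha q)}{1-\beta}\mathbf{H}_6(\alpha q^2;\beta q;q,xq,yq)+\frac{\alpha x(1-\alpha q)}{1-\beta}\mathbf{H}_6(\alpha q^2;\beta q;q,x,yq)$; (iii) $\mathbf{H}_7(\alpha q;\beta,\gamma;q,x,y)=\mathbf{H}_7(\alpha;\beta,\gamma;q,x,y)+\frac{\alpha x(1-\alpha q)}{1-\beta}\mathbf{H}_7(\alpha q^2;\beta q,\gamma;q,x,y)+\frac{\alpha xq(1-\alpha q)}{1-\beta}\mathbf{H}_7(\alpha q^2;\beta q,\gamma;q,xq,y)+\frac{\alpha y}{1-\gamma}\mathbf{H}_7(\alpha q;\beta,\gamma q;q,xq^2,y)$; (iv) $\mathbf{H}_7(\alpha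 q;\beta,\gamma;q,x,y)=\mathbf{H}_7(\alpha;\beta,\gamma;q,x,y)+\frac{\alpha y}{1-\gamma}\mathbf{H}_7(\alpha q;\beta,\gamma q;q,x,y)+\frac{\alpha xq(1-\alpha q)}{1-\beta}\mathbf{H}_7(\alpha q^2;\beta q,\gamma;q,xq,yq)+\frac{\alpha x(1-\alpha q)}{1-\beta}\mathbf{H}_7(\alpha q^2;\beta q,\gamma;q,x,yq)$.
   Context: Fix $q\in\mathbb{C}$ with $0<|q|<1$. For $a\in\mathbb{C}$ and $n\in\mathbb{N}_0$ the $q$-shifted factorial is $(a;q)_0=1$, $(a;q)_n=\prod_{k=0}^{n-1}(1-aq^k)$. For $\alpha\in\mathbb{C}$ and $\beta,\gamma\in\mathbb{C}\setminus\{q^{-n}:n\in\mathbb{N}_0\}$ the basic Horn functions are the double power series $\mathbf{H}_6(\alpha;\beta;q,x,y)=\sum_{r,s\ge0}\frac{(\alpha;q)_{2r+s}}{(\beta;q)_{r+s}(q;q)_r(q;q)_s}x^ry^s$ and $\mathbf{H}_7(\alpha;\beta,\gamma;q,x,y)=\sum_{r,s\ge0}\frac{(\alpha;q)_{2r+s}}{(\beta;q)_{r}(\gamma;q)_s(q;q)_r(q;q)_s}x^ry^s$. Expressions such as $\mathbf{H}_6(\alpha;\beta;q,xq,y)$ denote the series with $x$ replaced by $qx$ (and similarly for $y$). Identities are identities of formal power series in $x,y$ (equivalently of analytic functions near the origin). *)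

theory Defs
  imports Complex_Main "HOL-Computational_Algebra.Formal_Power_Series"
begin

definition qpoch :: "complex \<Rightarrow> complex \<Rightarrow> nat \<Rightarrow> complex" where
  "qpoch a q n = (\<Prod>k<n. (1 - a * q ^ k))"

text \<open>Formal power series in two variables x, y are modelled as
  complex fps fps: the outer variable is x, the inner variable is y.
  So x corresponds to fps_X and y to fps_const fps_X.\<close>

abbreviation fpsx :: "complex fps fps" where "fpsx \<equiv> fps_X"
abbreviation fpsy :: "complex fps fps" where "fpsy \<equiv> fps_const fps_X"
abbreviation cst2 :: "complex \<Rightarrow> complex fps fps" where "cst2 c \<equiv> fps_const (fps_const c)"

text \<open>H6 alpha beta q a b denotes the series H_6(alpha;beta;q,a x,b y),
  i.e. the basic Horn series with x replaced by a x and y by b y.\<close>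
definition H6 :: "complex \<Rightarrow> complex \<Rightarrow> complex \<Rightarrow> complex \<Rightarrow> complex \<Rightarrow> complex fps fps" where
  "H6 \<alpha> \<beta> q a b = Abs_fps (\<lambda>r. Abs_fps (\<lambda>s.
      qpoch \<alpha> q (2*r+s) / (qpoch \<beta> q (r+s) * qpoch q q r * qpoch q q s) * a ^ r * b ^ s))"

definition H7 :: "complex \<Rightarrow> complex \<Rightarrow> complex \<Rightarrow> complex \<Rightarrow> complex \<Rightarrow> complex \<Rightarrow> complex fps fps" where
  "H7 \<alpha> \<beta> \<gamma> q a b = Abs_fps (\<lambda>r. Abs_fps (\<lambda>s.
      qpoch \<alpha> q (2*r+s) / (qpoch \<beta> q r * qpoch \<gamma> q s * qpoch q q r * qpoch q q s) * a ^ r * b ^ s))"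

end

theory Submission imports Defs begin
abbreviation cf :: "complex fps fps \<Rightarrow> nat \<Rightarrow> nat \<Rightarrow> complex" where "cf F r s \<equiv> fps_nth (fps_nth F r) s"
lemma nth_cx: "cf (cst2 c * fpsx * F) r s = (if r = 0 then 0 else c * cf F (r-1) s)"
  by (cases r) (simp_all add: mult.assoc)
lemma nth_cy: "cf (cst2 c * fpsy * F) r s = (if s = 0 then 0 else c * cf F r (s-1))"
  by (cases s) (simp_all add: mult.assoc)
lemma qpoch_snoc: "qpoch a q (Suc n) = qpoch a q n * (1 - a*q^n)" by (simp add: qpoch_def)
lemma qpoch_shift: "qpoch a q (Suc n) = (1-a) * qpoch (a*q) q n"
  unfolding qpoch_def by (simp add: prod.lessThan_Suc_shift mult.assoc del: prod.lessThan_Suc)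
lemma qpoch_nz: "(\<And>k. a*q^k \<noteq> 1) \<Longrightarrow> qpoch a q n \<noteq> 0"
  unfolding qpoch_def by (auto simp: prod_zero_iff)
lemma H6_nth: "cf (H6 \<alpha> \<beta> q a b) r s =
   qpoch \<alpha> q (2*r+s) / (qpoch \<beta> q (r+s) * qpoch q q r * qpoch q q s) * a^r * b^s"
  by (simp add: H6_def)
lemma H7_nth: "cf (H7 \<alpha> \<beta> \<gamma> q a b) r s =
   qpoch \<alpha> q (2*r+s) / (qpoch \<beta> q r * qpoch \<gamma> q s * qpoch q q r * qpoch q q s) * a^r * b^s"
  by (simp add: H7_def)

lemma algX:
  fixes a q x y P B Qi Qs u :: complex
  assumes "B \<noteq> 0" "Qi \<noteq> 0" "Qs \<noteq> 0" "u \<noteq> 0" "1 - q*x \<noteq> 0"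
  shows "a*(1-a*q)/u * (P/(B*Qi*Qs) * y) + a*q*(1-a*q)/u * (P/(B*Qi*Qs) * x * y)
     = a*((1-a*q)*P)*y*((1-q*x)*(1+q*x)) / (u*B*(Qi*(1-q*x))*Qs)"
proof -
  define D where "D = u*B*(Qi*(1-q*x))*Qs"
  have e1: "a*(1-a*q)/u * (P/(B*Qi*Qs) * y) = a*(1-a*q)*P*y*(1-q*x) / D"
    using assms unfolding D_def by (simp add: field_simps)
  have e2: "a*q*(1-a*q)/u * (P/(B*Qi*Qs) * x * y) = a*q*(1-a*q)*P*x*y*(1-q*x) / D"
    using assms unfolding D_def by (simp add: field_simps)
  have h: "a*(1-a*q)*P*y*(1-q*x) + a*q*(1-a*q)*P*x*y*(1-q*x) = a*((1-a*q)*P)*y*((1-q*x)*(1+q*x))"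
    by algebra
  show ?thesis unfolding e1 e2 D_def[symmetric] add_divide_distrib[symmetric] h ..
qed

lemma algY:
  fixes a q y z P B Qr Qj u :: complex
  assumes "B \<noteq> 0" "Qr \<noteq> 0" "Qj \<noteq> 0" "u \<noteq> 0" "1 - q*y \<noteq> 0"
  shows "a/u * (P/(B*Qr*Qj) * z) = a*P*z*(1-q*y) / (u*B*Qr*(Qj*(1-q*y)))"
  using assms by (simp add: field_simps)

lemma x6a:
  assumes bnz: "\<And>n. qpoch (\<beta>*q) q n \<noteq> 0" and qnz: "\<And>n. qpoch q q n \<noteq> 0" and b1: "1 - \<beta> \<noteq> 0"
  shows "(if r = 0 then 0 else \<alpha>*(1-\<alpha>*q)/(1-\<beta>) * cf (H6 (\<alpha>*q^2) (\<beta>*q) q 1 1) (r-1) s)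
    + (if r = 0 then 0 else \<alpha>*q*(1-\<alpha>*q)/(1-\<beta>) * cf (H6 (\<alpha>*q^2) (\<beta>*q) q q 1) (r-1) s)
    = \<alpha> * qpoch (\<alpha>*q) q (2*r+s-1) * (1 - q^(2*r)) / (qpoch \<beta> q (r+s) * qpoch q q r * qpoch q q s)"
proof (cases r)
  case 0 then show ?thesis by simp
next
  case (Suc i)
  have v: "1 - q*q^i \<noteq> 0" using qnz[of "Suc i"] by (simp add: qpoch_snoc)
  have e1: "qpoch (\<alpha>*q) q (2*r+s-1) = (1-\<alpha>*q) * qpoch (\<alpha>*q^2) q (2*i+s)"
    using qpoch_shift[of "\<alpha>*q" q "2*i+s"] Suc by (simp add: power2_eq_square mult.assoc)
  have e2: "qpoch \<beta> q (r+s) = (1-\<beta>) * qpoch (\<beta>*q) q (i+s)"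
    using qpoch_shift[of \<beta> q "i+s"] Suc by simp
  have e3: "qpoch q q r = qpoch q q i * (1 - q*q^i)" using Suc by (simp add: qpoch_snoc)
  have e4: "1 - q^(2*r) = (1 - q*q^i) * (1 + q*q^i)" using Suc
    by (simp add: power_mult_distrib power_mult algebra_simps power2_eq_square)
  show ?thesis unfolding e1 e2 e3 e4 using Suc v algX[OF bnz[of "i+s"] qnz[of i] qnz[of s] b1 v, where a=\<alpha> and P="qpoch (\<alpha>*q^2) q (2*i+s)" and y=1]
    by (simp add: H6_nth)
qed
lemma x6b:
  assumes bnz: "\<And>n. qpoch (\<beta>*q) q n \<noteq> 0" and qnz: "\<And>n. qpoch q q n \<noteq> 0" and b1: "1 - \<beta> \<noteq> 0"
  shows "(if r = 0 then 0 else \<alpha>*q*(1-\<alpha>*q)/(1-\<beta>) * cf (H6 (\<alpha>*q^2) (\<beta>*q) q q q) (r-1) s)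
    + (if r = 0 then 0 else \<alpha>*(1-\<alpha>*q)/(1-\<beta>) * cf (H6 (\<alpha>*q^2) (\<beta>*q) q 1 q) (r-1) s)
    = \<alpha> * qpoch (\<alpha>*q) q (2*r+s-1) * q^s * (1 - q^(2*r)) / (qpoch \<beta> q (r+s) * qpoch q q r * qpoch q q s)"
proof (cases r)
  case 0 then show ?thesis by simp
next
  case (Suc i)
  have v: "1 - q*q^i \<noteq> 0" using qnz[of "Suc i"] by (simp add: qpoch_snoc)
  have e1: "qpoch (\<alpha>*q) q (2*r+s-1) = (1-\<alpha>*q) * qpoch (\<alpha>*q^2) q (2*i+s)"
    using qpoch_shift[of "\<alpha>*q" q "2*i+s"] Suc by (simp add: power2_eq_square mult.assoc)
  have e2: "qpoch \<beta> q (r+s) = (1-\<beta>) * qpoch (\<beta>*q) q (i+s)"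
    using qpoch_shift[of \<beta> q "i+s"] Suc by simp
  have e3: "qpoch q q r = qpoch q q i * (1 - q*q^i)" using Suc by (simp add: qpoch_snoc)
  have e4: "1 - q^(2*r) = (1 - q*q^i) * (1 + q*q^i)" using Suc
    by (simp add: power_mult_distrib power_mult algebra_simps power2_eq_square)
  show ?thesis unfolding e1 e2 e3 e4 using Suc v algX[OF bnz[of "i+s"] qnz[of i] qnz[of s] b1 v, where a=\<alpha> and P="qpoch (\<alpha>*q^2) q (2*i+s)" and y="q^s"]
    by (simp add: H6_nth add.commute mult.assoc)
qed

lemma x7a:
  assumes bnz: "\<And>n. qpoch (\<beta>*q) q n \<noteq> 0" and gnz: "\<And>n. qpoch \<gamma> q n \<noteq> 0" and qnz: "\<And>n. qpoch q q n \<noteq> 0" and b1: "1 - \<beta> \<noteq> 0"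
  shows "(if r = 0 then 0 else \<alpha>*(1-\<alpha>*q)/(1-\<beta>) * cf (H7 (\<alpha>*q^2) (\<beta>*q) \<gamma> q 1 1) (r-1) s)
    + (if r = 0 then 0 else \<alpha>*q*(1-\<alpha>*q)/(1-\<beta>) * cf (H7 (\<alpha>*q^2) (\<beta>*q) \<gamma> q q 1) (r-1) s)
    = \<alpha> * qpoch (\<alpha>*q) q (2*r+s-1) * (1 - q^(2*r)) / (qpoch \<beta> q r * qpoch \<gamma> q s * qpoch q q r * qpoch q q s)"
proof (cases r)
  case 0 then show ?thesis by simp
next
  case (Suc i)
  have v: "1 - q*q^i \<noteq> 0" using qnz[of "Suc i"] by (simp add: qpoch_snoc)
  have B: "qpoch (\<beta>*q) q i * qpoch \<gamma> q s \<noteq> 0" using bnz gnz by simp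
  have e1: "qpoch (\<alpha>*q) q (2*r+s-1) = (1-\<alpha>*q) * qpoch (\<alpha>*q^2) q (2*i+s)"
    using qpoch_shift[of "\<alpha>*q" q "2*i+s"] Suc by (simp add: power2_eq_square mult.assoc)
  have e2: "qpoch \<beta> q r = (1-\<beta>) * qpoch (\<beta>*q) q i"
    using qpoch_shift[of \<beta> q i] Suc by simp
  have e3: "qpoch q q r = qpoch q q i * (1 - q*q^i)" using Suc by (simp add: qpoch_snoc)
  have e4: "1 - q^(2*r) = (1 - q*q^i) * (1 + q*q^i)" using Suc
    by (simp add: power_mult_distrib power_mult algebra_simps power2_eq_square)
  show ?thesis unfolding e1 e2 e3 e4 using Suc v algX[OF B qnz[of i] qnz[of s] b1 v, where a=\<alpha> and P="qpoch (\<alpha>*q^2) q (2*i+s)" and y=1]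
    by (simp add: H7_nth mult.assoc)
qed

lemma x7b:
  assumes bnz: "\<And>n. qpoch (\<beta>*q) q n \<noteq> 0" and gnz: "\<And>n. qpoch \<gamma> q n \<noteq> 0" and qnz: "\<And>n. qpoch q q n \<noteq> 0" and b1: "1 - \<beta> \<noteq> 0"
  shows "(if r = 0 then 0 else \<alpha>*q*(1-\<alpha>*q)/(1-\<beta>) * cf (H7 (\<alpha>*q^2) (\<beta>*q) \<gamma> q q q) (r-1) s)
    + (if r = 0 then 0 else \<alpha>*(1-\<alpha>*q)/(1-\<beta>) * cf (H7 (\<alpha>*q^2) (\<beta>*q) \<gamma> q 1 q) (r-1) s)
    = \<alpha> * qpoch (\<alpha>*q) q (2*r+s-1) * q^s * (1 - q^(2*r)) / (qpoch \<beta> q r * qpoch \<gamma> q s * qpoch q q r * qpoch q q s)"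
proof (cases r)
  case 0 then show ?thesis by simp
next
  case (Suc i)
  have v: "1 - q*q^i \<noteq> 0" using qnz[of "Suc i"] by (simp add: qpoch_snoc)
  have B: "qpoch (\<beta>*q) q i * qpoch \<gamma> q s \<noteq> 0" using bnz gnz by simp
  have e1: "qpoch (\<alpha>*q) q (2*r+s-1) = (1-\<alpha>*q) * qpoch (\<alpha>*q^2) q (2*i+s)"
    using qpoch_shift[of "\<alpha>*q" q "2*i+s"] Suc by (simp add: power2_eq_square mult.assoc)
  have e2: "qpoch \<beta> q r = (1-\<beta>) * qpoch (\<beta>*q) q i"
    using qpoch_shift[of \<beta> q i] Suc by simp
  have e3: "qpoch q q r = qpoch q q i * (1 - q*q^i)" using Suc by (simp add: qpoch_snoc)
  have e4: "1 - q^(2*r) = (1 - q*q^i) * (1 + q*q^i)" using Suc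
    by (simp add: power_mult_distrib power_mult algebra_simps power2_eq_square)
  show ?thesis unfolding e1 e2 e3 e4 using Suc v algX[OF B qnz[of i] qnz[of s] b1 v, where a=\<alpha> and P="qpoch (\<alpha>*q^2) q (2*i+s)" and y="q^s"]
    by (simp add: H7_nth add.commute mult.assoc)
qed

lemma y6a:
  assumes bnz: "\<And>n. qpoch (\<beta>*q) q n \<noteq> 0" and qnz: "\<And>n. qpoch q q n \<noteq> 0" and b1: "1 - \<beta> \<noteq> 0"
  shows "(if s = 0 then 0 else \<alpha>/(1-\<beta>) * cf (H6 (\<alpha>*q) (\<beta>*q) q (q^2) 1) r (s-1))
    = \<alpha> * qpoch (\<alpha>*q) q (2*r+s-1) * q^(2*r) * (1 - q^s) / (qpoch \<beta> q (r+s) * qpoch q q r * qpoch q q s)"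
proof (cases s)
  case 0 then show ?thesis by simp
next
  case (Suc j)
  have v: "1 - q*q^j \<noteq> 0" using qnz[of "Suc j"] by (simp add: qpoch_snoc)
  have e2: "qpoch \<beta> q (r+s) = (1-\<beta>) * qpoch (\<beta>*q) q (r+j)"
    using qpoch_shift[of \<beta> q "r+j"] Suc by simp
  have e3: "qpoch q q s = qpoch q q j * (1 - q*q^j)" using Suc by (simp add: qpoch_snoc)
  have e4: "2*r+s-1 = 2*r+j" using Suc by simp
  show ?thesis unfolding e2 e3 e4 using Suc v algY[OF bnz[of "r+j"] qnz[of r] qnz[of j] b1 v, where a=\<alpha> and P="qpoch (\<alpha>*q) q (2*r+j)" and z="q^(2*r)"]
    by (simp add: H6_nth power_mult mult.assoc)
qed

lemma y6b:
  assumes bnz: "\<And>n. qpoch (\<beta>*q) q n \<noteq> 0" and qnz: "\<And>n. qpoch q q n \<noteq> 0" and b1: "1 - \<beta> \<noteq> 0"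
  shows "(if s = 0 then 0 else \<alpha>/(1-\<beta>) * cf (H6 (\<alpha>*q) (\<beta>*q) q 1 1) r (s-1))
    = \<alpha> * qpoch (\<alpha>*q) q (2*r+s-1) * (1 - q^s) / (qpoch \<beta> q (r+s) * qpoch q q r * qpoch q q s)"
proof (cases s)
  case 0 then show ?thesis by simp
next
  case (Suc j)
  have v: "1 - q*q^j \<noteq> 0" using qnz[of "Suc j"] by (simp add: qpoch_snoc)
  have e2: "qpoch \<beta> q (r+s) = (1-\<beta>) * qpoch (\<beta>*q) q (r+j)"
    using qpoch_shift[of \<beta> q "r+j"] Suc by simp
  have e3: "qpoch q q s = qpoch q q j * (1 - q*q^j)" using Suc by (simp add: qpoch_snoc)
  have e4: "2*r+s-1 = 2*r+j" using Suc by simp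
  show ?thesis unfolding e2 e3 e4 using Suc v algY[OF bnz[of "r+j"] qnz[of r] qnz[of j] b1 v, where a=\<alpha> and P="qpoch (\<alpha>*q) q (2*r+j)" and z=1]
    by (simp add: H6_nth mult.assoc)
qed

lemma y7a:
  assumes bnz: "\<And>n. qpoch \<beta> q n \<noteq> 0" and gnz: "\<And>n. qpoch (\<gamma>*q) q n \<noteq> 0" and qnz: "\<And>n. qpoch q q n \<noteq> 0" and g1: "1 - \<gamma> \<noteq> 0"
  shows "(if s = 0 then 0 else \<alpha>/(1-\<gamma>) * cf (H7 (\<alpha>*q) \<beta> (\<gamma>*q) q (q^2) 1) r (s-1))
    = \<alpha> * qpoch (\<alpha>*q) q (2*r+s-1) * q^(2*r) * (1 - q^s) / (qpoch \<beta> q r * qpoch \<gamma> q s * qpoch q q r * qpoch q q s)"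
proof (cases s)
  case 0 then show ?thesis by simp
next
  case (Suc j)
  have v: "1 - q*q^j \<noteq> 0" using qnz[of "Suc j"] by (simp add: qpoch_snoc)
  have B: "qpoch \<beta> q r * qpoch (\<gamma>*q) q j \<noteq> 0" using bnz gnz by simp
  have e2: "qpoch \<gamma> q s = (1-\<gamma>) * qpoch (\<gamma>*q) q j"
    using qpoch_shift[of \<gamma> q j] Suc by simp
  have e3: "qpoch q q s = qpoch q q j * (1 - q*q^j)" using Suc by (simp add: qpoch_snoc)
  have e4: "2*r+s-1 = 2*r+j" using Suc by simp
  show ?thesis unfolding e2 e3 e4 using Suc v algY[OF B qnz[of r] qnz[of j] g1 v, where a=\<alpha> and P="qpoch (\<alpha>*q) q (2*r+j)" and z="q^(2*r)"]
    by (simp add: H7_nth power_mult mult.assoc mult.left_commute)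
qed

lemma y7b:
  assumes bnz: "\<And>n. qpoch \<beta> q n \<noteq> 0" and gnz: "\<And>n. qpoch (\<gamma>*q) q n \<noteq> 0" and qnz: "\<And>n. qpoch q q n \<noteq> 0" and g1: "1 - \<gamma> \<noteq> 0"
  shows "(if s = 0 then 0 else \<alpha>/(1-\<gamma>) * cf (H7 (\<alpha>*q) \<beta> (\<gamma>*q) q 1 1) r (s-1))
    = \<alpha> * qpoch (\<alpha>*q) q (2*r+s-1) * (1 - q^s) / (qpoch \<beta> q r * qpoch \<gamma> q s * qpoch q q r * qpoch q q s)"
proof (cases s)
  case 0 then show ?thesis by simp
next
  case (Suc j)
  have v: "1 - q*q^j \<noteq> 0" using qnz[of "Suc j"] by (simp add: qpoch_snoc)
  have B: "qpoch \<beta> q r * qpoch (\<gamma>*q) q j \<noteq> 0" using bnz gnz by simp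
  have e2: "qpoch \<gamma> q s = (1-\<gamma>) * qpoch (\<gamma>*q) q j"
    using qpoch_shift[of \<gamma> q j] Suc by simp
  have e3: "qpoch q q s = qpoch q q j * (1 - q*q^j)" using Suc by (simp add: qpoch_snoc)
  have e4: "2*r+s-1 = 2*r+j" using Suc by simp
  show ?thesis unfolding e2 e3 e4 using Suc v algY[OF B qnz[of r] qnz[of j] g1 v, where a=\<alpha> and P="qpoch (\<alpha>*q) q (2*r+j)" and z=1]
    by (simp add: H7_nth mult.assoc mult.left_commute)
qed

lemma diffA: "qpoch (\<alpha>*q) q N = qpoch \<alpha> q N + \<alpha> * qpoch (\<alpha>*q) q (N-1) * (1 - q^N)"
proof (cases N)
  case 0 then show ?thesis by (simp add: qpoch_def)
next
  case (Suc M)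
  then show ?thesis by (simp add: qpoch_snoc[of "\<alpha>*q" q M] qpoch_shift[of \<alpha> q M] algebra_simps)
qed

lemma L6: "cf (H6 (\<alpha>*q) \<beta> q 1 1) r s = cf (H6 \<alpha> \<beta> q 1 1) r s
   + \<alpha> * qpoch (\<alpha>*q) q (2*r+s-1) * (1 - q^(2*r+s)) / (qpoch \<beta> q (r+s) * qpoch q q r * qpoch q q s)"
  unfolding H6_nth diffA[of \<alpha> q "2*r+s"] by (simp add: add_divide_distrib)

lemma L7: "cf (H7 (\<alpha>*q) \<beta> \<gamma> q 1 1) r s = cf (H7 \<alpha> \<beta> \<gamma> q 1 1) r s
   + \<alpha> * qpoch (\<alpha>*q) q (2*r+s-1) * (1 - q^(2*r+s)) / (qpoch \<beta> q r * qpoch \<gamma> q s * qpoch q q r * qpoch q q s)"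
  unfolding H7_nth diffA[of \<alpha> q "2*r+s"] by (simp add: add_divide_distrib)

lemma sumA: "(a::complex)*A*(1-q^(2*r+s))/D = a*A*(1-q^(2*r))/D + a*A*q^(2*r)*(1-q^s)/D"
proof -
  have "a*A*(1-q^(2*r+s)) = a*A*(1-q^(2*r)) + a*A*q^(2*r)*(1-q^s)" by (simp add: power_add algebra_simps)
  then show ?thesis by (simp add: add_divide_distrib[symmetric])
qed
lemma sumB: "(a::complex)*A*(1-q^(2*r+s))/D = a*A*(1-q^s)/D + a*A*q^s*(1-q^(2*r))/D"
proof -
  have "a*A*(1-q^(2*r+s)) = a*A*(1-q^s) + a*A*q^s*(1-q^(2*r))" by (simp add: power_add algebra_simps)
  then show ?thesis by (simp add: add_divide_distrib[symmetric])
qed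

lemma assoc3: "(c::complex) + x1 + x2 = c + (x1 + x2)" by (simp add: add.assoc)

theorem theorem2p1:
  fixes q \<alpha> \<beta> \<gamma> :: complex
  assumes "q \<noteq> 0" and "norm q < 1"
    and "\<forall>n::nat. \<beta> \<noteq> inverse (q ^ n)"
    and "\<forall>n::nat. \<gamma> \<noteq> inverse (q ^ n)"
  shows
   "(H6 (\<alpha>*q) \<beta> q 1 1 = H6 \<alpha> \<beta> q 1 1
      + cst2 (\<alpha>*(1-\<alpha>*q)/(1-\<beta>)) * fpsx * H6 (\<alpha>*q^2) (\<beta>*q) q 1 1
      + cst2 (\<alpha>*q*(1-\<alpha>*q)/(1-\<beta>)) * fpsx * H6 (\<alpha>*q^2) (\<beta>*q) q q 1
      + cst2 (\<alpha>/(1-\<beta>)) * fpsy * H6 (\<alpha>*q) (\<beta>*q) q (q^2) 1) \<and>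
   (H6 (\<alpha>*q) \<beta> q 1 1 = H6 \<alpha> \<beta> q 1 1
      + cst2 (\<alpha>/(1-\<beta>)) * fpsy * H6 (\<alpha>*q) (\<beta>*q) q 1 1
      + cst2 (\<alpha>*q*(1-\<alpha>*q)/(1-\<beta>)) * fpsx * H6 (\<alpha>*q^2) (\<beta>*q) q q q
      + cst2 (\<alpha>*(1-\<alpha>*q)/(1-\<beta>)) * fpsx * H6 (\<alpha>*q^2) (\<beta>*q) q 1 q) \<and>
   (H7 (\<alpha>*q) \<beta> \<gamma> q 1 1 = H7 \<alpha> \<beta> \<gamma> q 1 1
      + cst2 (\<alpha>*(1-\<alpha>*q)/(1-\<beta>)) * fpsx * H7 (\<alpha>*q^2) (\<beta>*q) \<gamma> q 1 1
      + cst2 (\<alpha>*q*(1-\<alpha>*q)/(1-\<beta>)) * fpsx * H7 (\<alpha>*q^2) (\<beta>*q) \<gamma> q q 1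
      + cst2 (\<alpha>/(1-\<gamma>)) * fpsy * H7 (\<alpha>*q) \<beta> (\<gamma>*q) q (q^2) 1) \<and>
   (H7 (\<alpha>*q) \<beta> \<gamma> q 1 1 = H7 \<alpha> \<beta> \<gamma> q 1 1
      + cst2 (\<alpha>/(1-\<gamma>)) * fpsy * H7 (\<alpha>*q) \<beta> (\<gamma>*q) q 1 1
      + cst2 (\<alpha>*q*(1-\<alpha>*q)/(1-\<beta>)) * fpsx * H7 (\<alpha>*q^2) (\<beta>*q) \<gamma> q q q
      + cst2 (\<alpha>*(1-\<alpha>*q)/(1-\<beta>)) * fpsx * H7 (\<alpha>*q^2) (\<beta>*q) \<gamma> q 1 q)"
proof -
  have bk: "\<beta> * q^k \<noteq> 1" for k
  proof
    assume "\<beta> * q^k = 1"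
    then have "\<beta> = inverse (q^k)" using assms(1) by (simp add: field_simps)
    then show False using assms(3) by blast
  qed
  have gk: "\<gamma> * q^k \<noteq> 1" for k
  proof
    assume "\<gamma> * q^k = 1"
    then have "\<gamma> = inverse (q^k)" using assms(1) by (simp add: field_simps)
    then show False using assms(4) by blast
  qed
  have qk: "q * q^k \<noteq> 1" for k
  proof
    assume "q * q^k = 1"
    then have "norm (q^Suc k) = 1" by simp
    moreover have "norm (q^Suc k) < 1" unfolding norm_power
      using assms(1,2) by (intro power_Suc_less_one) auto
    ultimately show False by simp
  qed
  have qnz: "\<And>n. qpoch q q n \<noteq> 0" by (rule qpoch_nz) (rule qk)
  have bnz: "\<And>n. qpoch \<beta> q n \<noteq> 0" by (rule qpoch_nz) (rule bk)
  have gnz: "\<And>n. qpoch \<gamma> q n \<noteq> 0" by (rule qpoch_nz) (rule gk)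
  have bqnz: "\<And>n. qpoch (\<beta>*q) q n \<noteq> 0" by (rule qpoch_nz) (use bk[of "Suc k" for k] in \<open>simp add: mult.assoc\<close>)
  have gqnz: "\<And>n. qpoch (\<gamma>*q) q n \<noteq> 0" by (rule qpoch_nz) (use gk[of "Suc k" for k] in \<open>simp add: mult.assoc\<close>)
  have b1: "1 - \<beta> \<noteq> 0" using bk[of 0] by simp
  have g1: "1 - \<gamma> \<noteq> 0" using gk[of 0] by simp
  show ?thesis
  proof (intro conjI; rule fps_ext; rule fps_ext)
    fix r s
    show "cf (H6 (\<alpha>*q) \<beta> q 1 1) r s = cf (H6 \<alpha> \<beta> q 1 1
      + cst2 (\<alpha>*(1-\<alpha>*q)/(1-\<beta>)) * fpsx * H6 (\<alpha>*q^2) (\<beta>*q) q 1 1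
      + cst2 (\<alpha>*q*(1-\<alpha>*q)/(1-\<beta>)) * fpsx * H6 (\<alpha>*q^2) (\<beta>*q) q q 1
      + cst2 (\<alpha>/(1-\<beta>)) * fpsy * H6 (\<alpha>*q) (\<beta>*q) q (q^2) 1) r s"
      unfolding fps_add_nth nth_cx nth_cy assoc3 L6 x6a[OF bqnz qnz b1] y6a[OF bqnz qnz b1]
      by (simp add: sumA add.assoc)
  next
    fix r s
    show "cf (H6 (\<alpha>*q) \<beta> q 1 1) r s = cf (H6 \<alpha> \<beta> q 1 1
      + cst2 (\<alpha>/(1-\<beta>)) * fpsy * H6 (\<alpha>*q) (\<beta>*q) q 1 1
      + cst2 (\<alpha>*q*(1-\<alpha>*q)/(1-\<beta>)) * fpsx * H6 (\<alpha>*q^2) (\<beta>*q) q q q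
      + cst2 (\<alpha>*(1-\<alpha>*q)/(1-\<beta>)) * fpsx * H6 (\<alpha>*q^2) (\<beta>*q) q 1 q) r s"
      unfolding fps_add_nth nth_cx nth_cy assoc3 L6[where \<alpha>=\<alpha> and \<beta>=\<beta>] x6b[OF bqnz qnz b1] y6b[OF bqnz qnz b1]
      by (simp add: sumB add.assoc)
  next
    fix r s
    show "cf (H7 (\<alpha>*q) \<beta> \<gamma> q 1 1) r s = cf (H7 \<alpha> \<beta> \<gamma> q 1 1
      + cst2 (\<alpha>*(1-\<alpha>*q)/(1-\<beta>)) * fpsx * H7 (\<alpha>*q^2) (\<beta>*q) \<gamma> q 1 1
      + cst2 (\<alpha>*q*(1-\<alpha>*q)/(1-\<beta>)) * fpsx * H7 (\<alpha>*q^2) (\<beta>*q) \<gamma> q q 1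
      + cst2 (\<alpha>/(1-\<gamma>)) * fpsy * H7 (\<alpha>*q) \<beta> (\<gamma>*q) q (q^2) 1) r s"
      unfolding fps_add_nth nth_cx nth_cy assoc3 L7 x7a[OF bqnz gnz qnz b1] y7a[OF bnz gqnz qnz g1]
      by (simp add: sumA add.assoc)
  next
    fix r s
    show "cf (H7 (\<alpha>*q) \<beta> \<gamma> q 1 1) r s = cf (H7 \<alpha> \<beta> \<gamma> q 1 1
      + cst2 (\<alpha>/(1-\<gamma>)) * fpsy * H7 (\<alpha>*q) \<beta> (\<gamma>*q) q 1 1
      + cst2 (\<alpha>*q*(1-\<alpha>*q)/(1-\<beta>)) * fpsx * H7 (\<alpha>*q^2) (\<beta>*q) \<gamma> q q q
      + cst2 (\<alpha>*(1-\<alpha>*q)/(1-\<beta>)) * fpsx * H7 (\<alpha>*q^2) (\<beta>*q) \<gamma> q 1 q) r s"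
      unfolding fps_add_nth nth_cx nth_cy assoc3 L7[where \<alpha>=\<alpha> and \<beta>=\<beta> and \<gamma>=\<gamma>] x7b[OF bqnz gnz qnz b1] y7b[OF bnz gqnz qnz g1]
      by (simp add: sumB add.assoc)
  qed
qed

end
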